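(* Let $x\in X$, $n\in \mathbb{Z}^k$ and $a\in \mathbb{R}^k$. (1) If $\phi(T^nx)>0$, then $B_{M/2}(n,1/\phi(T^nx))\subset V(x,n)$, where $B_{M/2}(\cdot)$ denotes the closed Euclidean ball of radius $M/2$ in $\mathbb{R}^{k+1}$. (2) If $W(x,n)$ is non-empty, then $1\leq 1/\phi(T^nx)\leq 2$. (3) If $(a,-H)\in V(x,n)$, i.e. $a\in W(x,n)$, then $|a-n|<L+\sqrt{k}$. (4) Let $s>1$ and $r>0$. One can choose $M$ sufficiently large depending on $s,r$ (and then choose the integer $L\geq M$, the function $\phi$ and the number $H\geq (L+\sqrt{k})^2$ for this $M$ as in the setting described in the context) so that, for all $x\in X$, $n\in\mathbb{Z}^k$, $a\in\mathbb{R}^k$: if $(a,-sH)\in V(x,n)$ then $B_r(a/s+(1-1/s)n)\subset W(x,n)$.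
   Context: Let $(X,\mathbb{Z}^k,T)$ be a dynamical system ($X$ a compact metric space with a continuous $\mathbb{Z}^k$-action) having the marker property: for every finite $F\subset\mathbb{Z}^k$ there is an open $U\subset X$ with $X=\bigcup_{n\in\mathbb{Z}^k}T^nU$ and $U\cap T^nU=\emptyset$ for all nonzero $n\in F$. Let $M$ be a positive integer. Fix an integer $L\geq M$ and a continuous function $\phi:X\to[0,1]$ such that: (i) if $\phi(x)>0$ then $\phi(T^nx)=0$ for all nonzero $n\in\mathbb{Z}^k$ with $|n|<M$; (ii) for every $x\in X$ there is $n\in\mathbb{Z}^k$ with $|n|<L$ and $\phi(T^nx)=1$ (such $L,\phi$ exist by the marker property). For $x\in X$ and $n\in\mathbb{Z}^k$ with $\phi(T^nx)\neq 0$, let $V(x,n)\subset\mathbb{R}^{k+1}$ be the Voronoi cell of the center $(n,1/\phi(T^nx))$ with respect to the set of centers $\{(m,1/\phi(T^mx)) : m\in\mathbb{Z}^k,\ \phi(T^mx)\neq0\}$, i.e. the set of $u\in\mathbb{R}^{k+1}$ with $|u-(n,1/\phi(T^nx))|\leq|u-(m,1/\phi(T^mx))|$ for all such $m$ ($|\cdot|$ the Euclidean norm); if $\phi(T^nx)=0$ set $V(x,n)=\emptyset$. Choose a real number $H\geq(L+\sqrt{k})^2$ and let $W(x,n)$ be the projection to the first $k$ coordinates of $V(x,n)\cap(\mathbb{R}^k\times\{-H\})$. Then $\mathbb{R}^k=\bigcup_{n\in\mathbb{Z}^k}W(x,n)$. $B_r(\cdot)$ denotes the closed Euclidean ball of radius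 $r$. *)

theory Defs
  imports "HOL-Analysis.Analysis"
begin

text \<open>Lattice points of Z^k are modelled as int^'k; zvec embeds them into R^k = real^'k.
  R^(k+1) is modelled as real^'k \<times> real (the product norm is Euclidean).\<close>

definition zvec :: "int^'k \<Rightarrow> real^'k" where
  "zvec n = (\<chi> i. real_of_int (n $ i))"

definition zk_system :: "'a::metric_space set \<Rightarrow> (int^'k \<Rightarrow> 'a \<Rightarrow> 'a) \<Rightarrow> bool" where
  "zk_system X T \<longleftrightarrow> compact X \<and>
     (\<forall>n. T n ` X \<subseteq> X \<and> continuous_on X (T n)) \<and>
     (\<forall>x\<in>X. T 0 x = x) \<and>
     (\<forall>m n. \<forall>x\<in>X. T (m + n) x = T m (T n x))"

definition marker_property :: "'a::metric_space set \<Rightarrow> (int^'k \<Rightarrow> 'a \<Rightarrow> 'a) \<Rightarrow> bool" where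
  "marker_property X T \<longleftrightarrow>
     (\<forall>F. finite F \<longrightarrow> (\<exists>U. openin (top_of_set X) U \<and> X = (\<Union>n. T n ` U) \<and>
        (\<forall>n\<in>F. n \<noteq> 0 \<longrightarrow> U \<inter> T n ` U = {})))"

definition good_setting ::
  "'a::metric_space set \<Rightarrow> (int^'k \<Rightarrow> 'a \<Rightarrow> 'a) \<Rightarrow> nat \<Rightarrow> nat \<Rightarrow> ('a \<Rightarrow> real) \<Rightarrow> real \<Rightarrow> bool" where
  "good_setting X T M L \<phi> H \<longleftrightarrow>
     M \<ge> 1 \<and> L \<ge> M \<and> continuous_on X \<phi> \<and> \<phi> ` X \<subseteq> {0..1} \<and>
     (\<forall>x\<in>X. \<phi> x > 0 \<longrightarrow> (\<forall>n. n \<noteq> 0 \<and> norm (zvec n) < real M \<longrightarrow> \<phi> (T n x) = 0)) \<and>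
     (\<forall>x\<in>X. \<exists>n. norm (zvec n) < real L \<and> \<phi> (T n x) = 1) \<and>
     H \<ge> (real L + sqrt (real CARD('k)))\<^sup>2"

definition voronoi :: "(int^'k \<Rightarrow> 'a \<Rightarrow> 'a) \<Rightarrow> ('a \<Rightarrow> real) \<Rightarrow> 'a \<Rightarrow> int^'k \<Rightarrow> ((real^'k) \<times> real) set" where
  "voronoi T \<phi> x n =
     (if \<phi> (T n x) = 0 then {}
      else {u. \<forall>m. \<phi> (T m x) \<noteq> 0 \<longrightarrow>
              norm (u - (zvec n, 1 / \<phi> (T n x))) \<le> norm (u - (zvec m, 1 / \<phi> (T m x)))})"

definition wcell :: "(int^'k \<Rightarrow> 'a \<Rightarrow> 'a) \<Rightarrow> ('a \<Rightarrow> real) \<Rightarrow> real \<Rightarrow> 'a \<Rightarrow> int^'k \<Rightarrow> (real^'k) set" where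
  "wcell T \<phi> H x n = {a. (a, - H) \<in> voronoi T \<phi> x n}"

end

theory Submission
  imports Defs
begin
lemma halfsp_eq:
  fixes c d w :: "'b::real_inner"
  shows "(norm (w - c) \<le> norm (w - d)) \<longleftrightarrow> inner (2 *\<^sub>R (d - c)) w \<le> inner d d - inner c c"
proof -
  have "(norm (w - c) \<le> norm (w - d)) \<longleftrightarrow> (norm (w - c))^2 \<le> (norm (w - d))^2"
    by (simp add: abs_le_square_iff)
  also have "\<dots> \<longleftrightarrow> inner (w-c) (w-c) \<le> inner (w-d) (w-d)" by (simp add: power2_norm_eq_inner)
  also have "\<dots> \<longleftrightarrow> inner (2 *\<^sub>R (d - c)) w \<le> inner d d - inner c c"
    by (simp add: inner_diff_left inner_diff_right inner_commute algebra_simps)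
  finally show ?thesis .
qed

lemma bisector_convex:
  fixes c d :: "'b::real_inner"
  shows "convex {w. norm (w - c) \<le> norm (w - d)}"
  unfolding halfsp_eq by (rule convex_halfspace_le)

lemma voronoi_convex: "convex (voronoi T \<phi> x n)"
proof -
  have "voronoi T \<phi> x n = (if \<phi> (T n x) = 0 then {} else
     (\<Inter>m\<in>{m. \<phi> (T m x) \<noteq> 0}. {u. norm (u - (zvec n, 1 / \<phi> (T n x))) \<le> norm (u - (zvec m, 1 / \<phi> (T m x)))}))"
    unfolding voronoi_def by auto
  then show ?thesis by (auto intro!: convex_INT bisector_convex)
qed

lemma zvec_diff: "zvec (m - n) = zvec m - zvec n" "zvec (m + n) = zvec m + zvec n"
  by (auto simp: zvec_def vec_eq_iff)

lemma floor_near: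
  fixes a :: "real^'k"
  shows "norm (a - zvec (\<chi> i. \<lfloor>a $ i\<rfloor>)) \<le> sqrt (real CARD('k))"
proof -
  have "norm (a - zvec (\<chi> i. \<lfloor>a $ i\<rfloor>)) = dist a (zvec (\<chi> i. \<lfloor>a $ i\<rfloor>))" by (simp add: dist_norm)
  also have "\<dots> = L2_set (\<lambda>i. dist (a$i) (zvec (\<chi> i. \<lfloor>a $ i\<rfloor>) $ i)) UNIV" by (simp add: dist_vec_def)
  also have "\<dots> \<le> L2_set (\<lambda>i::'k. 1::real) UNIV"
    by (rule L2_set_mono[where g="\<lambda>i. 1"]) (auto simp: zvec_def dist_real_def intro: less_imp_le,
       linarith)
  also have "\<dots> = sqrt (real CARD('k))" by (simp add: L2_set_constant)
  finally show ?thesis .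
qed


lemma gs_parts:
  fixes T :: "int^'k \<Rightarrow> 'a::metric_space \<Rightarrow> 'a"
  assumes "good_setting X T M L \<phi> H"
  shows gs_L: "real L \<ge> 1"
    and gs_range: "\<phi> ` X \<subseteq> {0..1}"
    and gs_i: "\<forall>x\<in>X. \<phi> x > 0 \<longrightarrow> (\<forall>n. n \<noteq> 0 \<and> norm (zvec n) < real M \<longrightarrow> \<phi> (T n x) = 0)"
    and gs_ii: "\<forall>x\<in>X. \<exists>n. norm (zvec n) < real L \<and> \<phi> (T n x) = 1"
    and gs_H: "H \<ge> (real L + sqrt (real CARD('k)))\<^sup>2"
proof -
  have A: "M \<ge> 1" "L \<ge> M" "\<phi> ` X \<subseteq> {0..1}"
    "\<forall>x\<in>X. \<phi> x > 0 \<longrightarrow> (\<forall>n. n \<noteq> 0 \<and> norm (zvec n) < real M \<longrightarrow> \<phi> (T n x) = 0)"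
    "\<forall>x\<in>X. \<exists>n. norm (zvec n) < real L \<and> \<phi> (T n x) = 1"
    "H \<ge> (real L + sqrt (real CARD('k)))\<^sup>2"
    using assms unfolding good_setting_def by simp_all
  show "real L \<ge> 1" using A(1,2) by simp
  show "\<phi> ` X \<subseteq> {0..1}" by (rule A(3))
  show "\<forall>x\<in>X. \<phi> x > 0 \<longrightarrow> (\<forall>n. n \<noteq> 0 \<and> norm (zvec n) < real M \<longrightarrow> \<phi> (T n x) = 0)" by (rule A(4))
  show "\<forall>x\<in>X. \<exists>n. norm (zvec n) < real L \<and> \<phi> (T n x) = 1" by (rule A(5))
  show "H \<ge> (real L + sqrt (real CARD('k)))\<^sup>2" by (rule A(6))
qed

lemma zk_mult: "zk_system X T \<Longrightarrow> x \<in> X \<Longrightarrow> T (m + n) x = T m (T n x)"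
  unfolding zk_system_def by blast

lemma T_in: "zk_system X T \<Longrightarrow> x \<in> X \<Longrightarrow> T m x \<in> X"
  unfolding zk_system_def by blast

lemma phi_range:
  assumes "zk_system X T" "good_setting X T M L \<phi> H" "x \<in> X"
  shows "0 \<le> \<phi> (T m x) \<and> \<phi> (T m x) \<le> 1"
  using gs_range[OF assms(2)] T_in[OF assms(1,3), of m] by auto

lemma sep:
  assumes "zk_system X T" "good_setting X T M L \<phi> H" "x \<in> X"
    and "\<phi> (T n x) \<noteq> 0" "\<phi> (T m x) \<noteq> 0" "m \<noteq> n"
  shows "real M \<le> norm (zvec m - zvec n)"
proof (rule ccontr)
  assume c: "\<not> ?thesis"
  have y: "T n x \<in> X" using T_in assms by blast
  have "\<phi> (T n x) > 0" using phi_range[OF assms(1-3), of n] assms(4) by auto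
  moreover have "m - n \<noteq> 0" using assms(6) by simp
  moreover have "norm (zvec (m - n)) < real M" using c by (simp add: zvec_diff)
  ultimately have "\<phi> (T (m - n) (T n x)) = 0" using gs_i[OF assms(2)] y by blast
  moreover have "T (m - n) (T n x) = T m x" using zk_mult[OF assms(1,3), of "m - n" n] by simp
  ultimately show False using assms(5) by simp
qed

lemma part1:
  assumes "zk_system X T" "good_setting X T M L \<phi> H" "x \<in> X" "\<phi> (T n x) > 0"
  shows "cball (zvec n, 1 / \<phi> (T n x)) (real M / 2) \<subseteq> voronoi T \<phi> x n"
proof
  fix u assume u: "u \<in> cball (zvec n, 1 / \<phi> (T n x)) (real M / 2)"
  let ?c = "(zvec n, 1 / \<phi> (T n x))"
  have du: "norm (u - ?c) \<le> real M / 2" using u by (simp add: dist_norm norm_minus_commute)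
  have "norm (u - ?c) \<le> norm (u - (zvec m, 1 / \<phi> (T m x)))" if "\<phi> (T m x) \<noteq> 0" for m
  proof (cases "m = n")
    case True then show ?thesis by simp
  next
    case False
    let ?d = "(zvec m, 1 / \<phi> (T m x))"
    have "real M \<le> norm (zvec m - zvec n)" using sep[OF assms(1-3) _ that False] assms(4) by simp
    also have "\<dots> \<le> norm (?d - ?c)" using norm_fst_le[of "zvec m - zvec n" "1 / \<phi> (T m x) - 1 / \<phi> (T n x)"] by simp
    also have "\<dots> \<le> norm (u - ?d) + norm (u - ?c)" using norm_triangle_ineq4[of "u - ?c" "u - ?d"] by (simp add: algebra_simps)
    finally show ?thesis using du by linarith
  qed
  then show "u \<in> voronoi T \<phi> x n" using assms(4) unfolding voronoi_def by auto
qed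

lemma near:
  assumes "zk_system X T" "good_setting X T M L \<phi> H" "x \<in> X"
  fixes a :: "real^'k::finite"
  shows "\<exists>m. \<phi> (T m x) = 1 \<and> norm (a - zvec m) < real L + sqrt (real CARD('k))"
proof -
  define p :: "int^'k" where "p = (\<chi> i. \<lfloor>a $ i\<rfloor>)"
  have p: "norm (a - zvec p) \<le> sqrt (real CARD('k))" unfolding p_def by (rule floor_near)
  have "T p x \<in> X" by (rule T_in[OF assms(1,3)])
  then obtain d where d: "norm (zvec d) < real L" "\<phi> (T d (T p x)) = 1"
    using gs_ii[OF assms(2)] by blast
  have "T d (T p x) = T (d + p) x" using zk_mult[OF assms(1,3)] by simp
  have "norm (a - zvec (d + p)) \<le> norm (a - zvec p) + norm (zvec d)"
  proof -
    have "a - zvec (d + p) = (a - zvec p) - zvec d" by (simp add: zvec_diff)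
    then show ?thesis using norm_triangle_ineq4[of "a - zvec p" "zvec d"] by (simp only:)
  qed
  hence "norm (a - zvec (d + p)) < real L + sqrt (real CARD('k))" using d(1) p by linarith
  moreover have "\<phi> (T (d + p) x) = 1" using d(2) \<open>T d (T p x) = T (d + p) x\<close> by simp
  ultimately show ?thesis by blast
qed

lemma normP: "norm (u, - h - (t::real)) = sqrt ((norm u)^2 + (h + t)^2)"
proof -
  have e: "- h - t = - (h + t)" by simp
  have "(\<bar>- h - t\<bar>)^2 = (h + t)^2" unfolding power2_abs e power2_minus ..
  then show ?thesis unfolding norm_Pair real_norm_def by simp
qed

lemma key:
  fixes a :: "real^'k::finite" and T :: "int^'k \<Rightarrow> 'a::metric_space \<Rightarrow> 'a"
  assumes "zk_system X T" "good_setting X T M L \<phi> H" "x \<in> X"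
    and "(a, - h) \<in> voronoi T \<phi> x n" "h \<ge> H"
  shows "\<phi> (T n x) > 0 \<and> 1 \<le> 1 / \<phi> (T n x) \<and> 1 / \<phi> (T n x) \<le> 2 \<and>
         norm (a - zvec n) < real L + sqrt (real CARD('k))"
proof -
  have nz: "\<phi> (T n x) \<noteq> 0" using assms(4) unfolding voronoi_def by (auto split: if_splits)
  have pr: "0 \<le> \<phi> (T n x)" "\<phi> (T n x) \<le> 1" using phi_range[OF assms(1-3)] by auto
  hence pos: "\<phi> (T n x) > 0" using nz by simp
  define t where "t = 1 / \<phi> (T n x)"
  have t1: "1 \<le> t" unfolding t_def using pos pr by simp
  obtain m where m: "\<phi> (T m x) = 1" "norm (a - zvec m) < real L + sqrt (real CARD('k))"
    using near[OF assms(1-3), of a] by blast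
  have all: "\<forall>m. \<phi> (T m x) \<noteq> 0 \<longrightarrow> norm ((a, -h) - (zvec n, t)) \<le> norm ((a, -h) - (zvec m, 1 / \<phi> (T m x)))"
  proof -
    have "voronoi T \<phi> x n = {u. \<forall>m. \<phi> (T m x) \<noteq> 0 \<longrightarrow>
              norm (u - (zvec n, 1 / \<phi> (T n x))) \<le> norm (u - (zvec m, 1 / \<phi> (T m x)))}"
      unfolding voronoi_def by (rule if_not_P[OF nz])
    then show ?thesis using assms(4) unfolding t_def by (simp only: mem_Collect_eq)
  qed
  have "norm ((a, -h) - (zvec n, t)) \<le> norm ((a, -h) - (zvec m, 1 / \<phi> (T m x)))"
    using all[rule_format, of m] m(1) by simp
  hence "norm (a - zvec n, -h - t) \<le> norm (a - zvec m, -h - 1)" using m(1) by simp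
  hence "sqrt ((norm (a - zvec n))^2 + (h + t)^2) \<le> sqrt ((norm (a - zvec m))^2 + (h + 1)^2)"
    by (simp only: normP)
  hence ineq: "(norm (a - zvec n))^2 + (h + t)^2 \<le> (norm (a - zvec m))^2 + (h + 1)^2" by simp
  have L1: "real L \<ge> 1" by (rule gs_L[OF assms(2)])
  have "(norm (a - zvec m))^2 < (real L + sqrt (real CARD('k)))^2"
    using m(2) by (intro power_strict_mono) auto
  also have "\<dots> \<le> H" by (rule gs_H[OF assms(2)])
  finally have B: "(norm (a - zvec m))^2 < h" using assms(5) by simp
  have hpos: "h > 0" using B zero_le_power2[of "norm (a - zvec m)"] by linarith
  have "t \<le> 2"
  proof (rule ccontr)
    assume "\<not> t \<le> 2"
    hence "(h + t)^2 \<ge> (h+2)^2" using hpos by (intro power_mono) auto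
    moreover have "(h+2)^2 = h^2+4*h+4" "(h+1)^2 = h^2 + 2*h+1" by algebra+
    ultimately show False using ineq B hpos zero_le_power2[of "norm (a - zvec n)"] by linarith
  qed
  moreover have "(norm (a - zvec n))^2 < (real L + sqrt (real CARD('k)))^2"
  proof -
    have "(h + t)^2 \<ge> (h+1)^2" using hpos t1 by (intro power_mono) auto
    hence "(norm (a - zvec n))^2 \<le> (norm (a - zvec m))^2" using ineq by linarith
    also have "\<dots> < (real L + sqrt (real CARD('k)))^2" using m(2) by (intro power_strict_mono) auto
    finally show ?thesis .
  qed
  hence "norm (a - zvec n) < real L + sqrt (real CARD('k))"
    by (rule power2_less_imp_less) (use L1 in auto)
  ultimately show ?thesis using pos t1 unfolding t_def by auto
qed

lemma grp_id: "x + (y + (z - x - y)) = (z::'b::ab_group_add)"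
  by (simp add: algebra_simps)

lemma part4:
  fixes a :: "real^'k::finite" and T :: "int^'k \<Rightarrow> 'a::metric_space \<Rightarrow> 'a"
  assumes "zk_system X T" "good_setting X T M L \<phi> H" "x \<in> X"
    and s: "s > 1" and r: "r > 0"
    and M: "2 * sqrt (r^2 + 4) / (1 - 1 / s) \<le> real M"
    and u: "(a, - (s * H)) \<in> voronoi T \<phi> x n"
  shows "cball (a /\<^sub>R s + (1 - 1 / s) *\<^sub>R zvec n) r \<subseteq> wcell T \<phi> H x n"
proof
  fix b assume b: "b \<in> cball (a /\<^sub>R s + (1 - 1 / s) *\<^sub>R zvec n) r"
  define p0 where "p0 = a /\<^sub>R s + (1 - 1 / s) *\<^sub>R zvec n"
  define \<mu> where "\<mu> = 1 - 1 / s"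
  define t where "t = 1 / \<phi> (T n x)"
  define c where "c = (zvec n, t)"
  define uu where "uu = (a, - (s * H))"
  define w where "w = (b, - H) - (1 / s) *\<^sub>R uu - \<mu> *\<^sub>R c"
  define v where "v = c + (1 / \<mu>) *\<^sub>R w"
  have L1: "real L \<ge> 1" by (rule gs_L[OF assms(2)])
  have "(real L + sqrt (real CARD('k)))^2 \<ge> 1" using L1
    by (metis add_increasing2 one_le_power real_sqrt_ge_zero of_nat_0_le_iff)
  hence H1: "H \<ge> 1" using gs_H[OF assms(2)] by linarith
  have sH: "s * H \<ge> H" using s H1 by simp
  from key[OF assms(1-3) u sH] have K: "\<phi> (T n x) > 0" "1 \<le> t" "t \<le> 2" unfolding t_def by auto
  have mu: "0 < \<mu>" "\<mu> < 1" using s unfolding \<mu>_def by (auto simp: field_simps)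
  have bp: "norm (b - p0) \<le> r" using b unfolding p0_def by (simp add: dist_norm norm_minus_commute)
  have wfst: "fst w = b - p0" unfolding w_def p0_def uu_def c_def \<mu>_def by (simp add: algebra_simps inverse_eq_divide)
  have wsnd: "snd w = - (\<mu> * t)" unfolding w_def uu_def c_def using s by (simp add: algebra_simps)
  have "norm w = sqrt ((norm (b - p0))^2 + (\<mu> * t)^2)"
  proof -
    have "w = (b - p0, - (\<mu> * t))" using wfst wsnd by (metis prod.collapse)
    then show ?thesis by (simp add: norm_Pair)
  qed
  also have "\<dots> \<le> sqrt (r^2 + 4)"
  proof -
    have "(norm (b - p0))^2 \<le> r^2" using bp by (intro power_mono) auto
    moreover have "\<mu> * t \<le> 2" "0 \<le> \<mu> * t" proof -
      have "\<mu> * t \<le> 1 * t" using mu K by (intro mult_right_mono) auto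
      then show "\<mu> * t \<le> 2" using K by linarith
      show "0 \<le> \<mu> * t" using mu K by simp
    qed
    hence "(\<mu> * t)^2 \<le> 2^2" by (intro power_mono) auto
    ultimately show ?thesis by simp
  qed
  finally have nw: "norm w \<le> sqrt (r^2 + 4)" .
  have "norm (v - c) = norm w / \<mu>" unfolding v_def using mu by simp
  also have "\<dots> \<le> sqrt (r^2 + 4) / \<mu>" using nw mu by (simp add: divide_right_mono)
  also have "\<dots> \<le> real M / 2"
  proof -
    have "2 * sqrt (r^2 + 4) / \<mu> \<le> real M" using M unfolding \<mu>_def .
    moreover have "2 * sqrt (r^2 + 4) / \<mu> = 2 * (sqrt (r^2 + 4) / \<mu>)" by simp
    ultimately show ?thesis by linarith
  qed
  finally have "v \<in> cball c (real M / 2)" by (simp add: dist_norm norm_minus_commute)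
  hence vV: "v \<in> voronoi T \<phi> x n" using part1[OF assms(1-3) K(1)] unfolding c_def t_def by blast
  have eq: "(b, - H) = (1 / s) *\<^sub>R uu + \<mu> *\<^sub>R v"
  proof -
    have "\<mu> *\<^sub>R v = \<mu> *\<^sub>R c + w" unfolding v_def using mu by (simp add: scaleR_add_right)
    hence "(1 / s) *\<^sub>R uu + \<mu> *\<^sub>R v = (1 / s) *\<^sub>R uu + (\<mu> *\<^sub>R c + w)" by simp
    also have "\<dots> = (b, - H)" unfolding w_def by (rule grp_id)
    finally show ?thesis by (rule sym)
  qed
  have "(1 / s) *\<^sub>R uu + \<mu> *\<^sub>R v \<in> voronoi T \<phi> x n"
  proof (rule convexD[OF voronoi_convex])
    show "uu \<in> voronoi T \<phi> x n" using u unfolding uu_def .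
    show "v \<in> voronoi T \<phi> x n" by (rule vV)
    show "0 \<le> 1 / s" using s by simp
    show "0 \<le> \<mu>" using mu by simp
    show "1 / s + \<mu> = 1" unfolding \<mu>_def by simp
  qed
  hence "(b, - H) \<in> voronoi T \<phi> x n" by (simp only: eq)
  then show "b \<in> wcell T \<phi> H x n" unfolding wcell_def by (rule CollectI)
qed
theorem lemma4p1:
  fixes X :: "'a::metric_space set" and T :: "int^'k \<Rightarrow> 'a \<Rightarrow> 'a"
  assumes "zk_system X T" and "marker_property X T"
  shows "(\<forall>M L \<phi> H. good_setting X T M L \<phi> H \<longrightarrow>
            (\<forall>x\<in>X. \<forall>n. \<forall>a.
               (\<phi> (T n x) > 0 \<longrightarrow>
                  cball (zvec n, 1 / \<phi> (T n x)) (real M / 2) \<subseteq> voronoi T \<phi> x n) \<and>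
               (wcell T \<phi> H x n \<noteq> {} \<longrightarrow> 1 \<le> 1 / \<phi> (T n x) \<and> 1 / \<phi> (T n x) \<le> 2) \<and>
               ((a, - H) \<in> voronoi T \<phi> x n \<longrightarrow>
                  norm (a - zvec n) < real L + sqrt (real CARD('k)))))
       \<and>
       (\<forall>s r. s > 1 \<and> r > (0::real) \<longrightarrow>
          (\<exists>M0::nat. \<forall>M L \<phi> H. M \<ge> M0 \<and> good_setting X T M L \<phi> H \<longrightarrow>
             (\<forall>x\<in>X. \<forall>n. \<forall>a.
                (a, - (s * H)) \<in> voronoi T \<phi> x n \<longrightarrow>
                cball (a /\<^sub>R s + (1 - 1 / s) *\<^sub>R zvec n) r \<subseteq> wcell T \<phi> H x n)))"
proof (intro conjI allI impI)
  fix M L \<phi> H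
  assume gs: "good_setting X T M L \<phi> H"
  show "\<forall>x\<in>X. \<forall>n a.
           (0 < \<phi> (T n x) \<longrightarrow> cball (zvec n, 1 / \<phi> (T n x)) (real M / 2) \<subseteq> voronoi T \<phi> x n) \<and>
           (wcell T \<phi> H x n \<noteq> {} \<longrightarrow> 1 \<le> 1 / \<phi> (T n x) \<and> 1 / \<phi> (T n x) \<le> 2) \<and>
           ((a, - H) \<in> voronoi T \<phi> x n \<longrightarrow> norm (a - zvec n) < real L + sqrt (real CARD('k)))"
  proof (intro ballI allI conjI impI)
    fix x n a assume x: "x \<in> X"
    show "0 < \<phi> (T n x) \<Longrightarrow> cball (zvec n, 1 / \<phi> (T n x)) (real M / 2) \<subseteq> voronoi T \<phi> x n"
      by (rule part1[OF assms(1) gs x])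
    show "(a, - H) \<in> voronoi T \<phi> x n \<Longrightarrow> norm (a - zvec n) < real L + sqrt (real CARD('k))"
    proof -
      assume hv: "(a, - H) \<in> voronoi T \<phi> x n"
      from key[OF assms(1) gs x hv order_refl]
      show "norm (a - zvec n) < real L + sqrt (real CARD('k))" by (elim conjE)
    qed
    assume "wcell T \<phi> H x n \<noteq> {}"
    then obtain a' where "(a', - H) \<in> voronoi T \<phi> x n" unfolding wcell_def by auto
    note kk = key[OF assms(1) gs x this order_refl]
    show "1 \<le> 1 / \<phi> (T n x)" using kk by (elim conjE)
    show "1 / \<phi> (T n x) \<le> 2" using kk by (elim conjE)
  qed
next
  fix s r :: real
  assume sr: "1 < s \<and> 0 < r"
  define M0 where "M0 = nat \<lceil>2 * sqrt (r^2 + 4) / (1 - 1 / s)\<rceil>"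
  show "\<exists>M0. \<forall>M L \<phi> H. M0 \<le> M \<and> good_setting X T M L \<phi> H \<longrightarrow>
          (\<forall>x\<in>X. \<forall>n a. (a, - (s * H)) \<in> voronoi T \<phi> x n \<longrightarrow>
             cball (a /\<^sub>R s + (1 - 1 / s) *\<^sub>R zvec n) r \<subseteq> wcell T \<phi> H x n)"
  proof (intro exI[of _ M0] allI impI ballI)
    fix M L \<phi> H x n a
    assume h: "M0 \<le> M \<and> good_setting X T M L \<phi> H" and x: "x \<in> X"
      and u: "(a, - (s * H)) \<in> voronoi T \<phi> x n"
    have "2 * sqrt (r^2 + 4) / (1 - 1 / s) \<le> real M0"
      unfolding M0_def by (rule real_nat_ceiling_ge)
    also have "\<dots> \<le> real M" using h by simp
    finally have M: "2 * sqrt (r^2 + 4) / (1 - 1 / s) \<le> real M" .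
    show "cball (a /\<^sub>R s + (1 - 1 / s) *\<^sub>R zvec n) r \<subseteq> wcell T \<phi> H x n"
    proof (rule part4[OF assms(1) _ x _ _ M u])
      show "good_setting X T M L \<phi> H" using h by (elim conjE)
      show "1 < s" using sr by (elim conjE)
      show "0 < r" using sr by (elim conjE)
    qed
  qed
qed

end
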